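(* Let $\mathbb{K}$ be either $\mathbb{R}$ or $\mathbb{C}$, with all coefficients and solutions in $\mathbb{K}$. Let $D$ be a positive integer and let $1 \le D < q \le \infty$. For all $k\in\{1,\dots,D\}$ let $\mathcal{D}_k = \{(d_1,\dots,d_k)\in\mathbb{N}^k : d_1+\cdots+d_k\le D\}$. Let $I$ be an infinite set and $\mathbf{x} = (x_j)_{j=1}^\infty$. For all $i\in I$ and $d\in\{1,\dots,D\}$ let $\mathbf{a}_{i,d} = (a_{i,d,j})_{j=1}^\infty \in \ell^{q/(q-d)}$ and $(\mathbf{a}_{i,d},\mathbf{x}^d) = \sum_{j=1}^\infty a_{i,d,j} x_j^d$. For all $i\in I$ define the multiplicative polynomial \[ P_i(\mathbf{x}) = \sum_{k=1}^{D}\sum_{(d_1,\dots,d_k)\in\mathcal{D}_k} (\mathbf{a}_{i,d_1},\mathbf{x}^{d_1})(\mathbf{a}_{i,d_2},\mathbf{x}^{d_2})\cdots(\mathbf{a}_{i,d_k},\mathbf{x}^{d_k}) \] (equivalently $\sum_{k=1}^D\sum_{\Delta\in\mathcal{D}_k}\sum_{J\in\mathbb{N}^k} a_{i,\Delta,J}x_J^\Delta$ with multiplicative coefficients $a_{i,(d_1,\dots,d_k),(j_1,\dots,j_k)} = a_{i,d_1,j_1}\cdots a_{i,d_k,j_k}$ and $x_J^\Delta = x_{j_1}^{d_1}\cdots x_{j_k}^{d_k}$). Let $M>0$ and $\mathbf{b} = (b_i)_{i\in I}$ with $b_i\in\mathbb{K}$. If for every $\varepsilon>0$ and every finite subset $S$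 of $I$ the finite set of inequalities $\{|P_i(\mathbf{x}) - b_i| \le \varepsilon : i\in S\}$ has a solution $\mathbf{x}_{S,\varepsilon}\in\ell^q$ with $\|\mathbf{x}_{S,\varepsilon}\|_q\le M$, then the infinite set of equations $\{P_i(\mathbf{x}) = b_i : i\in I\}$ has an exact solution $\mathbf{x}\in\ell^q$ with $\|\mathbf{x}\|_q\le M$.
   Context: $\mathbb{N}=\{1,2,3,\dots\}$. For $q=\infty$ one sets $q/(q-d)=1$ and $q/d=\infty$. $\ell^p$ ($1\le p<\infty$) denotes sequences with $\|\mathbf{a}\|_p=(\sum_j|a_j|^p)^{1/p}<\infty$ and $\ell^\infty$ bounded sequences with the sup norm; $\mathbf{x}^d=(x_j^d)_{j\ge1}$. For $\mathbf{x}\in\ell^q$ each series $(\mathbf{a}_{i,d},\mathbf{x}^d)$ converges absolutely by Hölder's inequality. *)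

theory Defs
  imports "HOL-Analysis.Analysis"
begin

text \<open>Sequences are indexed by nat (index 0 plays the role of index 1 of the paper).
  Exponents p are extended reals; p = \<infinity> means the sup-norm space.\<close>

definition in_lp :: "ereal \<Rightarrow> (nat \<Rightarrow> 'a::real_normed_vector) \<Rightarrow> bool" where
  "in_lp p x = (if p = \<infinity> then bdd_above (range (\<lambda>j. norm (x j)))
                else summable (\<lambda>j. norm (x j) powr real_of_ereal p))"

definition lp_norm :: "ereal \<Rightarrow> (nat \<Rightarrow> 'a::real_normed_vector) \<Rightarrow> real" where
  "lp_norm p x = (if p = \<infinity> then (SUP j. norm (x j))
                  else (\<Sum>j. norm (x j) powr real_of_ereal p) powr (1 / real_of_ereal p))"

definition conj_exp :: "ereal \<Rightarrow> nat \<Rightarrow> ereal" where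
  "conj_exp q d = (if q = \<infinity> then 1
                   else ereal (real_of_ereal q / (real_of_ereal q - real d)))"

definition pairing :: "(nat \<Rightarrow> 'a::real_normed_field) \<Rightarrow> (nat \<Rightarrow> 'a) \<Rightarrow> nat \<Rightarrow> 'a" where
  "pairing a x d = (\<Sum>j. a j * x j ^ d)"

definition tuples :: "nat \<Rightarrow> nat \<Rightarrow> nat list set" where
  "tuples D k = {ds. length ds = k \<and> (\<forall>d\<in>set ds. 1 \<le> d) \<and> sum_list ds \<le> D}"

definition mult_poly :: "nat \<Rightarrow> (nat \<Rightarrow> nat \<Rightarrow> 'a::real_normed_field) \<Rightarrow> (nat \<Rightarrow> 'a) \<Rightarrow> 'a" where
  "mult_poly D a x = (\<Sum>k\<in>{1..D}. \<Sum>ds\<in>tuples D k. prod_list (map (\<lambda>d. pairing (a d) x d) ds))"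

end

theory Submission
  imports Defs
begin


lemma compact_box:
  fixes M :: real
  shows "compact {x :: nat \<Rightarrow> 'a::{heine_borel,real_normed_vector}. \<forall>j. norm (x j) \<le> M}"
proof -
  have "compactin (product_topology (\<lambda>_. euclidean) UNIV) (PiE UNIV (\<lambda>_. cball (0::'a) M))"
    by (simp add: compactin_PiE)
  moreover have "PiE UNIV (\<lambda>_. cball (0::'a) M) = {x. \<forall>j. norm (x j) \<le> M}"
    by (auto simp: PiE_def extensional_def)
  ultimately show ?thesis
    by (metis compactin_euclidean_iff euclidean_product_topology)
qed

lemma ball_fin_char:
  fixes x :: "nat \<Rightarrow> 'a::real_normed_vector"
  assumes r: "r > 0" and M: "M > 0"
  shows "(in_lp (ereal r) x \<and> lp_norm (ereal r) x \<le> M) \<longleftrightarrow>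
         (\<forall>N. (\<Sum>j<N. norm (x j) powr r) \<le> M powr r)"
proof
  assume h: "in_lp (ereal r) x \<and> lp_norm (ereal r) x \<le> M"
  hence s: "summable (\<lambda>j. norm (x j) powr r)" by (simp add: in_lp_def)
  have le: "(\<Sum>j. norm (x j) powr r) powr (1/r) \<le> M" using h by (simp add: lp_norm_def)
  have nn: "(\<Sum>j. norm (x j) powr r) \<ge> 0" by (intro suminf_nonneg s) auto
  have "(\<Sum>j. norm (x j) powr r) = ((\<Sum>j. norm (x j) powr r) powr (1/r)) powr r"
    using nn r by (simp add: powr_powr)
  also have "\<dots> \<le> M powr r" using le r nn by (intro powr_mono2) auto
  finally have "(\<Sum>j. norm (x j) powr r) \<le> M powr r" .
  thus "\<forall>N. (\<Sum>j<N. norm (x j) powr r) \<le> M powr r"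
    using sum_le_suminf[OF s] by (meson finite_lessThan order_trans powr_ge_zero)
next
  assume h: "\<forall>N. (\<Sum>j<N. norm (x j) powr r) \<le> M powr r"
  have s: "summable (\<lambda>j. norm (x j) powr r)"
    using h by (intro summableI_nonneg_bounded) auto
  have le: "(\<Sum>j. norm (x j) powr r) \<le> M powr r"
    using h s by (intro suminf_le_const) auto
  have nn: "(\<Sum>j. norm (x j) powr r) \<ge> 0" by (intro suminf_nonneg s) auto
  have "(\<Sum>j. norm (x j) powr r) powr (1/r) \<le> (M powr r) powr (1/r)"
    using le nn r by (intro powr_mono2) auto
  also have "\<dots> = M" using M r by (simp add: powr_powr)
  finally show "in_lp (ereal r) x \<and> lp_norm (ereal r) x \<le> M"
    using s by (simp add: in_lp_def lp_norm_def)
qed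

lemma ball_inf_char:
  fixes x :: "nat \<Rightarrow> 'a::real_normed_vector"
  shows "(in_lp \<infinity> x \<and> lp_norm \<infinity> x \<le> M) \<longleftrightarrow> (\<forall>j. norm (x j) \<le> M)"
proof
  assume h: "in_lp \<infinity> x \<and> lp_norm \<infinity> x \<le> M"
  show "\<forall>j. norm (x j) \<le> M"
  proof
    fix j
    have "norm (x j) \<le> (SUP j. norm (x j))" using h by (intro cSUP_upper) (auto simp: in_lp_def)
    thus "norm (x j) \<le> M" using h by (simp add: lp_norm_def)
  qed
next
  assume h: "\<forall>j. norm (x j) \<le> M"
  hence "bdd_above (range (\<lambda>j. norm (x j)))" by (auto intro: bdd_aboveI)
  moreover have "(SUP j. norm (x j)) \<le> M" using h by (intro cSUP_least) auto
  ultimately show "in_lp \<infinity> x \<and> lp_norm \<infinity> x \<le> M" by (simp add: in_lp_def lp_norm_def)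
qed

lemma closed_fin_ball:
  assumes r: "r > 0"
  shows "closed {x :: nat \<Rightarrow> 'a::real_normed_vector. \<forall>N. (\<Sum>j<N. norm (x j) powr r) \<le> M powr r}"
proof -
  have "{x :: nat \<Rightarrow> 'a. \<forall>N. (\<Sum>j<N. norm (x j) powr r) \<le> M powr r}
      = (\<Inter>N. {x. (\<Sum>j<N. norm (x j) powr r) \<le> M powr r})" by auto
  moreover have "closed {x :: nat \<Rightarrow> 'a. (\<Sum>j<N. norm (x j) powr r) \<le> M powr r}" for N
  proof (rule closed_Collect_le)
    have c1: "continuous_on UNIV (\<lambda>x::nat \<Rightarrow> 'a. x j)" for j
      by (rule continuous_on_product_coordinates)
    have c2: "continuous_on UNIV (\<lambda>x::nat \<Rightarrow> 'a. norm (x j) powr r)" for j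
      by (rule continuous_on_powr'[OF continuous_on_norm[OF c1] continuous_on_const]) (use r in auto)
    show "continuous_on UNIV (\<lambda>x :: nat \<Rightarrow> 'a. \<Sum>j<N. norm (x j) powr r)"
      by (rule continuous_on_sum) (rule c2)
  qed (rule continuous_on_const)
  ultimately show ?thesis by (simp add: closed_INT)
qed

lemma closed_inf_ball:
  "closed {x :: nat \<Rightarrow> 'a::real_normed_vector. \<forall>j. norm (x j) \<le> M}"
proof -
  have "{x :: nat \<Rightarrow> 'a. \<forall>j. norm (x j) \<le> M} = (\<Inter>j. {x. norm (x j) \<le> M})" by auto
  moreover have "closed {x :: nat \<Rightarrow> 'a. norm (x j) \<le> M}" for j
    by (intro closed_Collect_le continuous_on_norm continuous_on_product_coordinates continuous_on_const)
  ultimately show ?thesis by (simp add: closed_INT)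
qed

lemma fip_main:
  fixes P :: "'i \<Rightarrow> (nat \<Rightarrow> 'a::real_normed_vector) \<Rightarrow> 'a" and b :: "'i \<Rightarrow> 'a"
  assumes K: "compact B"
    and cont: "\<And>i. i \<in> I \<Longrightarrow> continuous_on B (P i)"
    and H: "\<And>\<epsilon> S. \<epsilon> > 0 \<Longrightarrow> finite S \<Longrightarrow> S \<subseteq> I \<Longrightarrow> \<exists>x\<in>B. \<forall>i\<in>S. norm (P i x - b i) \<le> \<epsilon>"
  shows "\<exists>x\<in>B. \<forall>i\<in>I. P i x = b i"
proof -
  define F where "F = (\<lambda>(i, n::nat). B \<inter> (\<lambda>x. P i x - b i) -` cball 0 (1 / (real n + 1)))"
  have cB: "closed B" using K by (rule compact_imp_closed)
  have "B \<inter> \<Inter>(F ` (I \<times> UNIV)) \<noteq> {}"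
  proof (rule compact_imp_fip[OF K])
    fix T assume "T \<in> F ` (I \<times> UNIV)"
    then obtain i n where i: "i \<in> I" and T: "T = F (i, n)" by auto
    have "continuous_on B (\<lambda>x. P i x - b i)"
      using cont[OF i] by (intro continuous_on_diff continuous_on_const)
    thus "closed T" unfolding T F_def using cB by (auto intro: continuous_closed_preimage)
  next
    fix F' assume fin: "finite F'" and sub: "F' \<subseteq> F ` (I \<times> UNIV)"
    then obtain G where G: "G \<subseteq> I \<times> UNIV" "finite G" "F' = F ` G"
      by (meson finite_subset_image)
    define n where "n = Max (insert 0 (snd ` G))"
    have "1 / (real n + 1) > 0" by simp
    then obtain x where x: "x \<in> B" and hx: "\<forall>i\<in>fst ` G. norm (P i x - b i) \<le> 1 / (real n + 1)"
      using H[of "1 / (real n + 1)" "fst ` G"] G by force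
    have "x \<in> B \<inter> \<Inter>F'"
    proof -
      have "x \<in> F (i, m)" if "(i, m) \<in> G" for i m
      proof -
        have "m \<le> n" unfolding n_def using that G(2) by (intro Max_ge) force+
        hence "1 / (real n + 1) \<le> 1 / (real m + 1)" by (intro divide_left_mono) auto
        moreover have "norm (P i x - b i) \<le> 1 / (real n + 1)" using hx that by force
        ultimately show ?thesis unfolding F_def using x by (auto simp: dist_norm norm_minus_commute)
      qed
      thus ?thesis using x G(3) by auto
    qed
    thus "B \<inter> \<Inter>F' \<noteq> {}" by blast
  qed
  then obtain x where x: "x \<in> B" and hx: "\<forall>T\<in>F ` (I \<times> UNIV). x \<in> T" by blast
  have "P i x = b i" if i: "i \<in> I" for i
  proof -
    have "norm (P i x - b i) \<le> 1 / (real n + 1)" for n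
    proof -
      have "x \<in> F (i, n)" using hx i by blast
      thus ?thesis unfolding F_def by (simp add: dist_norm norm_minus_commute)
    qed
    show ?thesis
    proof (rule ccontr)
      assume "P i x \<noteq> b i"
      hence "norm (P i x - b i) > 0" by simp
      then obtain n where "inverse (real (Suc n)) < norm (P i x - b i)"
        using reals_Archimedean by blast
      moreover have "norm (P i x - b i) \<le> 1 / (real n + 1)" by fact
      moreover have "inverse (real (Suc n)) = 1 / (real n + 1)" by (simp add: inverse_eq_divide)
      ultimately show False by linarith
    qed
  qed
  with x show ?thesis by blast
qed

lemma prod_list_cont:
  fixes f :: "nat \<Rightarrow> (nat \<Rightarrow> 'a::real_normed_field) \<Rightarrow> 'a"
  assumes "\<And>d. d \<in> set ds \<Longrightarrow> continuous_on B (f d)"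
  shows "continuous_on B (\<lambda>x. prod_list (map (\<lambda>d. f d x) ds))"
  using assms
proof (induction ds)
  case Nil thus ?case by (simp add: continuous_on_const)
next
  case (Cons d ds)
  have "continuous_on B (\<lambda>x. f d x * prod_list (map (\<lambda>d. f d x) ds))"
    using Cons by (intro continuous_on_mult) auto
  thus ?case by simp
qed

lemma mult_poly_cont:
  fixes a :: "nat \<Rightarrow> nat \<Rightarrow> 'a::real_normed_field"
  assumes "\<And>d. d \<in> {1..D} \<Longrightarrow> continuous_on B (\<lambda>x. pairing (a d) x d)"
  shows "continuous_on B (mult_poly D a)"
proof -
  have "continuous_on B (\<lambda>x. prod_list (map (\<lambda>d. pairing (a d) x d) ds))"
    if "ds \<in> tuples D k" for k ds
  proof (rule prod_list_cont)
    fix d assume d: "d \<in> set ds"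
    have "d \<le> sum_list ds" using d by (simp add: member_le_sum_list)
    hence "d \<in> {1..D}" using that d by (auto simp: tuples_def)
    thus "continuous_on B (\<lambda>x. pairing (a d) x d)" by (rule assms)
  qed
  hence "continuous_on B (\<lambda>x. \<Sum>k\<in>{1..D}. \<Sum>ds\<in>tuples D k. prod_list (map (\<lambda>d. pairing (a d) x d) ds))"
    by (intro continuous_on_sum) auto
  thus ?thesis unfolding mult_poly_def[abs_def] by simp
qed

lemma pairing_cont:
  fixes a :: "nat \<Rightarrow> 'a::{real_normed_field,banach}"
  assumes summ: "\<And>x. x \<in> B \<Longrightarrow> summable (\<lambda>j. a j * x j ^ d)"
    and uc: "uniformly_Cauchy_on B (\<lambda>N x. \<Sum>j<N. a j * x j ^ d)"
  shows "continuous_on B (\<lambda>x. pairing a x d)"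
proof -
  obtain l where l: "uniform_limit B (\<lambda>N x. \<Sum>j<N. a j * x j ^ d) l sequentially"
    using Cauchy_uniformly_convergent[OF uc] unfolding uniformly_convergent_on_def by blast
  have "continuous_on B l"
  proof (rule uniform_limit_theorem[OF _ l])
    show "\<forall>\<^sub>F n in sequentially. continuous_on B (\<lambda>x. \<Sum>j<n. a j * x j ^ d)"
    proof (intro always_eventually allI continuous_on_sum)
      fix n j
      have "continuous_on B (\<lambda>x. x j)"
        by (rule continuous_on_subset[OF continuous_on_product_coordinates]) simp
      thus "continuous_on B (\<lambda>x. a j * x j ^ d)"
        by (intro continuous_on_mult continuous_on_const continuous_on_power)
    qed
  qed simp
  moreover have "l x = pairing a x d" if x: "x \<in> B" for x
  proof -
    have "(\<lambda>N. \<Sum>j<N. a j * x j ^ d) \<longlonglongrightarrow> l x"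
      using tendsto_uniform_limitI[OF l x] .
    moreover have "(\<lambda>N. \<Sum>j<N. a j * x j ^ d) \<longlonglongrightarrow> pairing a x d"
      unfolding pairing_def using summable_LIMSEQ[OF summ[OF x]] .
    ultimately show ?thesis by (rule LIMSEQ_unique)
  qed
  ultimately show ?thesis by (rule continuous_on_eq)
qed



lemma young_half:
  fixes \<alpha> \<beta> p p' :: real
  assumes "\<alpha> \<ge> 0" "\<beta> \<ge> 0" "p > 1" "p' > 1" "1/p + 1/p' = 1" "\<beta> powr p' \<le> \<alpha> powr p"
  shows "\<alpha> * \<beta> \<le> \<alpha> powr p"
proof (cases "\<alpha> = 0")
  case True thus ?thesis by simp
next
  case False
  hence a: "\<alpha> > 0" using assms by simp
  have "\<beta> = (\<beta> powr p') powr (1/p')" using assms by (simp add: powr_powr)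
  also have "\<dots> \<le> (\<alpha> powr p) powr (1/p')" using assms by (intro powr_mono2) auto
  also have "\<dots> = \<alpha> powr (p - 1)"
  proof -
    have "p / p' = p - 1" using assms by (simp add: field_simps)
    thus ?thesis by (simp add: powr_powr)
  qed
  finally have "\<alpha> * \<beta> \<le> \<alpha> * \<alpha> powr (p - 1)" using a by simp
  also have "\<dots> = \<alpha> powr p" using a by (simp add: powr_diff)
  finally show ?thesis .
qed

lemma young_simple:
  fixes \<alpha> \<beta> p p' :: real
  assumes "\<alpha> \<ge> 0" "\<beta> \<ge> 0" "p > 1" "p' > 1" "1/p + 1/p' = 1"
  shows "\<alpha> * \<beta> \<le> \<alpha> powr p + \<beta> powr p'"
proof (cases "\<beta> powr p' \<le> \<alpha> powr p")
  case True
  thus ?thesis using young_half[OF assms True] powr_ge_zero[of \<beta> p'] by linarith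
next
  case False
  hence "\<alpha> powr p \<le> \<beta> powr p'" by simp
  from young_half[of \<beta> \<alpha> p' p, OF assms(2,1,4,3) _ this] assms(5)
  have "\<beta> * \<alpha> \<le> \<beta> powr p'" by (metis add.commute)
  hence "\<alpha> * \<beta> \<le> \<beta> powr p'" by (simp add: mult.commute)
  thus ?thesis using powr_ge_zero[of \<alpha> p] by linarith
qed

lemma pt_bound:
  fixes \<alpha> t lam r :: real
  assumes d: "d \<ge> 1" and r: "r > real d" and l: "lam > 0" and a: "\<alpha> \<ge> 0" and t: "t \<ge> 0"
  shows "\<alpha> * t ^ d \<le> \<alpha> powr (r / (r - d)) / lam powr (r / (r - d)) + lam powr (r / d) * t powr r"
proof -
  have d0: "real d > 0" using d by simp
  have "(\<alpha> / lam) * (lam * t ^ d) \<le> (\<alpha> / lam) powr (r / (r - d)) + (lam * t ^ d) powr (r / d)"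
  proof (rule young_simple)
    show "r / (r - d) > 1" using r d0 by (simp add: field_simps)
    show "r / d > 1" using r d0 by (simp add: field_simps)
    show "1 / (r / (r - d)) + 1 / (r / d) = 1" using r d0 by (simp add: field_simps)
  qed (use a l t in auto)
  moreover have "(\<alpha> / lam) * (lam * t ^ d) = \<alpha> * t ^ d" using l by simp
  moreover have "(\<alpha> / lam) powr (r / (r - d)) = \<alpha> powr (r / (r - d)) / lam powr (r / (r - d))"
    using a l by (simp add: powr_divide)
  moreover have "(lam * t ^ d) powr (r / d) = lam powr (r / d) * t powr r"
  proof -
    have "t ^ d = t powr (real d)" using t d
      by (cases "t = 0") (auto simp: powr_realpow)
    hence "(t ^ d) powr (r / d) = t powr r" using d0 t by (simp add: powr_powr)
    thus ?thesis using l t by (simp add: powr_mult)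
  qed
  ultimately show ?thesis by simp
qed

lemma sum_diff_ivl:
  fixes g :: "nat \<Rightarrow> 'a::ab_group_add"
  assumes "m \<le> n"
  shows "(\<Sum>j<n. g j) - (\<Sum>j<m. g j) = (\<Sum>j\<in>{m..<n}. g j)"
proof -
  have "(\<Sum>j<n. g j) = (\<Sum>j<m. g j) + (\<Sum>j\<in>{m..<n}. g j)"
    using assms by (metis atLeast0LessThan sum.atLeastLessThan_concat zero_le)
  thus ?thesis by simp
qed

lemma uc_fin:
  fixes a :: "nat \<Rightarrow> 'a::{real_normed_field,banach}" and r M :: real
  assumes d: "d \<ge> 1" and r: "r > real d" and M: "M > 0"
    and sa: "summable (\<lambda>j. norm (a j) powr (r / (r - d)))"
  defines "B \<equiv> {x :: nat \<Rightarrow> 'a. \<forall>N. (\<Sum>j<N. norm (x j) powr r) \<le> M powr r}"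
  shows "uniformly_Cauchy_on B (\<lambda>N x. \<Sum>j<N. a j * x j ^ d)"
    and "\<And>x. x \<in> B \<Longrightarrow> summable (\<lambda>j. a j * x j ^ d)"
proof -
  define p where "p = r / (r - d)"
  define p' where "p' = r / d"
  have d0: "real d > 0" using d by simp
  have xs: "summable (\<lambda>j. norm (x j) powr r)" if "x \<in> B" for x
    using that unfolding B_def by (intro summableI_nonneg_bounded) auto
  show "summable (\<lambda>j. a j * x j ^ d)" if x: "x \<in> B" for x
  proof (rule summable_comparison_test')
    show "summable (\<lambda>j. norm (a j) powr p / 1 powr p + 1 powr p' * norm (x j) powr r)"
      using sa xs[OF x] unfolding p_def by (intro summable_add) auto
    fix j :: nat
    have "norm (a j * x j ^ d) = norm (a j) * norm (x j) ^ d" by (simp add: norm_mult norm_power)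
    also have "\<dots> \<le> norm (a j) powr p / 1 powr p + 1 powr p' * norm (x j) powr r"
      unfolding p_def p'_def by (rule pt_bound[OF d r]) auto
    finally show "norm (a j * x j ^ d) \<le> norm (a j) powr p / 1 powr p + 1 powr p' * norm (x j) powr r" .
  qed
  show "uniformly_Cauchy_on B (\<lambda>N x. \<Sum>j<N. a j * x j ^ d)"
    unfolding uniformly_Cauchy_on_def
  proof (intro allI impI)
    fix e :: real assume e: "e > 0"
    define c where "c = e / (2 * (M powr r + 1))"
    have Mr: "M powr r + 1 > 0" using powr_ge_zero[of M r] by linarith
    hence c: "c > 0" unfolding c_def using e by simp
    define lam where "lam = c powr (1 / p')"
    have lam: "lam > 0" unfolding lam_def using c by simp
    have lamp: "lam powr p' = c" unfolding lam_def p'_def using c d0 r by (simp add: powr_powr)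
    have "lam powr p * e / 2 > 0" using lam e by simp
    then obtain N where N: "\<And>m n. m \<ge> N \<Longrightarrow> norm (\<Sum>j\<in>{m..<n}. norm (a j) powr p) < lam powr p * e / 2"
      using sa unfolding summable_Cauchy p_def by blast
    have key: "norm ((\<Sum>j<n. a j * x j ^ d) - (\<Sum>j<m. a j * x j ^ d)) < e"
      if x: "x \<in> B" and mn: "N \<le> m" "m \<le> n" for x m n
    proof -
      have "norm ((\<Sum>j<n. a j * x j ^ d) - (\<Sum>j<m. a j * x j ^ d))
            = norm (\<Sum>j\<in>{m..<n}. a j * x j ^ d)" using mn by (simp add: sum_diff_ivl)
      also have "\<dots> \<le> (\<Sum>j\<in>{m..<n}. norm (a j) * norm (x j) ^ d)"
        by (rule order_trans[OF norm_sum]) (simp add: norm_mult norm_power)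
      also have "\<dots> \<le> (\<Sum>j\<in>{m..<n}. norm (a j) powr p / lam powr p + lam powr p' * norm (x j) powr r)"
        by (intro sum_mono) (unfold p_def p'_def, rule pt_bound[OF d r lam], auto)
      also have "\<dots> = (\<Sum>j\<in>{m..<n}. norm (a j) powr p) / lam powr p
                     + c * (\<Sum>j\<in>{m..<n}. norm (x j) powr r)"
        by (simp add: sum.distrib sum_divide_distrib sum_distrib_left lamp)
      also have "\<dots> < e / 2 + c * M powr r"
      proof (rule add_less_le_mono)
        have "(\<Sum>j\<in>{m..<n}. norm (a j) powr p) = norm (\<Sum>j\<in>{m..<n}. norm (a j) powr p)"
          by (simp add: sum_nonneg)
        also have "\<dots> < lam powr p * e / 2" using N mn by simp
        finally show "(\<Sum>j\<in>{m..<n}. norm (a j) powr p) / lam powr p < e / 2"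
          using lam by (simp add: divide_simps mult.commute)
        have "(\<Sum>j\<in>{m..<n}. norm (x j) powr r) \<le> (\<Sum>j<n. norm (x j) powr r)"
          by (intro sum_mono2) auto
        also have "\<dots> \<le> M powr r" using x unfolding B_def by blast
        finally show "c * (\<Sum>j\<in>{m..<n}. norm (x j) powr r) \<le> c * M powr r"
          using c by simp
      qed
      also have "\<dots> \<le> e"
      proof -
        have "c * M powr r = e / 2 * (M powr r / (M powr r + 1))"
          unfolding c_def by (simp add: field_simps)
        also have "\<dots> \<le> e / 2 * 1"
          using e Mr by (intro mult_left_mono) (auto simp: divide_le_eq_1)
        finally show ?thesis by simp
      qed
      finally show ?thesis .
    qed
    show "\<exists>N. \<forall>x\<in>B. \<forall>m\<ge>N. \<forall>n\<ge>N. dist (\<Sum>j<m. a j * x j ^ d) (\<Sum>j<n. a j * x j ^ d) < e"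
    proof (intro exI ballI allI impI)
      fix x m n assume x: "x \<in> B" and "N \<le> m" "N \<le> n"
      show "dist (\<Sum>j<m. a j * x j ^ d) (\<Sum>j<n. a j * x j ^ d) < e"
      proof (cases "m \<le> n")
        case True thus ?thesis using key[OF x \<open>N \<le> m\<close> True] by (metis dist_norm dist_commute)
      next
        case False thus ?thesis using key[OF x \<open>N \<le> n\<close>, of m] by (simp add: dist_norm)
      qed
    qed
  qed
qed

lemma uc_inf:
  fixes a :: "nat \<Rightarrow> 'a::{real_normed_field,banach}" and M :: real
  assumes M: "M > 0" and sa: "summable (\<lambda>j. norm (a j))"
  defines "B \<equiv> {x :: nat \<Rightarrow> 'a. \<forall>j. norm (x j) \<le> M}"
  shows "uniformly_Cauchy_on B (\<lambda>N x. \<Sum>j<N. a j * x j ^ d)"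
    and "\<And>x. x \<in> B \<Longrightarrow> summable (\<lambda>j. a j * x j ^ d)"
proof -
  have pb: "norm (a j * x j ^ d) \<le> norm (a j) * M ^ d" if "x \<in> B" for x j
  proof -
    have "norm (x j) ^ d \<le> M ^ d" using that unfolding B_def by (intro power_mono) auto
    thus ?thesis by (simp add: norm_mult norm_power mult_left_mono)
  qed
  show "summable (\<lambda>j. a j * x j ^ d)" if x: "x \<in> B" for x
    by (rule summable_comparison_test'[OF summable_mult2[OF sa] pb[OF x]])
  show "uniformly_Cauchy_on B (\<lambda>N x. \<Sum>j<N. a j * x j ^ d)"
    unfolding uniformly_Cauchy_on_def
  proof (intro allI impI)
    fix e :: real assume e: "e > 0"
    have Md: "M ^ d + 1 > 0" using M by (simp add: add_pos_nonneg)
    hence "e / (M ^ d + 1) > 0" using e by simp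
    then obtain N where N: "\<And>m n. m \<ge> N \<Longrightarrow> norm (\<Sum>j\<in>{m..<n}. norm (a j)) < e / (M ^ d + 1)"
      using sa unfolding summable_Cauchy by blast
    have key: "norm ((\<Sum>j<n. a j * x j ^ d) - (\<Sum>j<m. a j * x j ^ d)) < e"
      if x: "x \<in> B" and mn: "N \<le> m" "m \<le> n" for x m n
    proof -
      have "norm ((\<Sum>j<n. a j * x j ^ d) - (\<Sum>j<m. a j * x j ^ d))
            = norm (\<Sum>j\<in>{m..<n}. a j * x j ^ d)" using mn by (simp add: sum_diff_ivl)
      also have "\<dots> \<le> (\<Sum>j\<in>{m..<n}. norm (a j) * M ^ d)"
        by (rule order_trans[OF norm_sum]) (intro sum_mono pb[OF x])
      also have "\<dots> = (\<Sum>j\<in>{m..<n}. norm (a j)) * M ^ d" by (simp add: sum_distrib_right)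
      also have "\<dots> \<le> (\<Sum>j\<in>{m..<n}. norm (a j)) * (M ^ d + 1)"
        by (intro mult_left_mono) (auto simp: sum_nonneg)
      also have "\<dots> < e / (M ^ d + 1) * (M ^ d + 1)"
      proof (rule mult_strict_right_mono[OF _ Md])
        have "(\<Sum>j\<in>{m..<n}. norm (a j)) = norm (\<Sum>j\<in>{m..<n}. norm (a j))" by (simp add: sum_nonneg)
        also have "\<dots> < e / (M ^ d + 1)" using N[OF mn(1)] by blast
        finally show "(\<Sum>j\<in>{m..<n}. norm (a j)) < e / (M ^ d + 1)" .
      qed
      also have "\<dots> = e" using Md by simp
      finally show ?thesis .
    qed
    show "\<exists>N. \<forall>x\<in>B. \<forall>m\<ge>N. \<forall>n\<ge>N. dist (\<Sum>j<m. a j * x j ^ d) (\<Sum>j<n. a j * x j ^ d) < e"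
    proof (intro exI ballI allI impI)
      fix x m n assume x: "x \<in> B" and "N \<le> m" "N \<le> n"
      show "dist (\<Sum>j<m. a j * x j ^ d) (\<Sum>j<n. a j * x j ^ d) < e"
      proof (cases "m \<le> n")
        case True thus ?thesis using key[OF x \<open>N \<le> m\<close> True] by (metis dist_norm dist_commute)
      next
        case False thus ?thesis using key[OF x \<open>N \<le> n\<close>, of m] by (simp add: dist_norm)
      qed
    qed
  qed
qed


lemma main_gen:
  fixes a :: "'i \<Rightarrow> nat \<Rightarrow> nat \<Rightarrow> 'a::{real_normed_field,banach,heine_borel}" and b :: "'i \<Rightarrow> 'a"
    and q :: ereal and M :: real
  assumes D: "1 \<le> D" and q: "ereal (real D) < q"
    and ain: "\<forall>i\<in>I. \<forall>d\<in>{1..D}. in_lp (conj_exp q d) (a i d)" and M: "M > 0"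
    and H: "\<forall>\<epsilon>>0. \<forall>S. finite S \<and> S \<subseteq> I \<longrightarrow>
         (\<exists>x. in_lp q x \<and> lp_norm q x \<le> M \<and> (\<forall>i\<in>S. norm (mult_poly D (a i) x - b i) \<le> \<epsilon>))"
  shows "\<exists>x. in_lp q x \<and> lp_norm q x \<le> M \<and> (\<forall>i\<in>I. mult_poly D (a i) x = b i)"
proof -
  have gen: "\<exists>x. in_lp q x \<and> lp_norm q x \<le> M \<and> (\<forall>i\<in>I. mult_poly D (a i) x = b i)"
    if Bq: "\<And>x. (in_lp q x \<and> lp_norm q x \<le> M) \<longleftrightarrow> x \<in> B" and K: "compact B"
      and pc: "\<And>i d. i \<in> I \<Longrightarrow> d \<in> {1..D} \<Longrightarrow> continuous_on B (\<lambda>x. pairing (a i d) x d)"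
    for B
  proof -
    have "\<exists>x\<in>B. \<forall>i\<in>I. mult_poly D (a i) x = b i"
    proof (rule fip_main[OF K])
      show "continuous_on B (mult_poly D (a i))" if "i \<in> I" for i
        using pc[OF that] by (rule mult_poly_cont)
      show "\<exists>x\<in>B. \<forall>i\<in>S. norm (mult_poly D (a i) x - b i) \<le> \<epsilon>"
        if eS: "\<epsilon> > 0" "finite S" "S \<subseteq> I" for \<epsilon> S
      proof -
        obtain x where x1: "in_lp q x \<and> lp_norm q x \<le> M"
          and x2: "\<forall>i\<in>S. norm (mult_poly D (a i) x - b i) \<le> \<epsilon>"
          using H eS by blast
        have "x \<in> B" using x1 Bq by blast
        thus ?thesis using x2 by blast
      qed
    qed
    thus ?thesis using Bq by blast
  qed
  show ?thesis
  proof (cases "q = \<infinity>")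
    case True
    define B where "B = {x :: nat \<Rightarrow> 'a. \<forall>j. norm (x j) \<le> M}"
    show ?thesis
    proof (rule gen[of B])
      show "(in_lp q x \<and> lp_norm q x \<le> M) \<longleftrightarrow> x \<in> B" for x
        unfolding True B_def using ball_inf_char[of x M] by simp
      show "compact B" unfolding B_def by (rule compact_box)
      fix i d assume i: "i \<in> I" and d: "d \<in> {1..D}"
      have "in_lp 1 (a i d)" using ain i d True by (simp add: conj_exp_def)
      hence sa: "summable (\<lambda>j. norm (a i d j))" by (simp add: in_lp_def)
      show "continuous_on B (\<lambda>x. pairing (a i d) x d)"
        using pairing_cont[of B "a i d" d] uc_inf[OF M sa, where d=d] unfolding B_def by blast
    qed
  next
    case False
    obtain r where qr: "q = ereal r" using False q by (cases q) auto
    have r: "r > real D" using q qr by simp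
    have r0: "r > 0" using r D by linarith
    define B where "B = {x :: nat \<Rightarrow> 'a. \<forall>N. (\<Sum>j<N. norm (x j) powr r) \<le> M powr r}"
    show ?thesis
    proof (rule gen[of B])
      show "(in_lp q x \<and> lp_norm q x \<le> M) \<longleftrightarrow> x \<in> B" for x
        unfolding qr B_def using ball_fin_char[OF r0 M, of x] by simp
      have sub: "B \<subseteq> {x. \<forall>j. norm (x j) \<le> M}"
      proof (safe)
        fix x j assume x: "x \<in> B"
        have "norm (x j) powr r \<le> (\<Sum>k<Suc j. norm (x k) powr r)"
          by (rule member_le_sum) auto
        also have "\<dots> \<le> M powr r" using x unfolding B_def by blast
        finally have le: "norm (x j) powr r \<le> M powr r" .
        show "norm (x j) \<le> M"
        proof (rule ccontr)
          assume "\<not> norm (x j) \<le> M"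
          hence "M powr r < norm (x j) powr r" using M r0 by (intro powr_less_mono2) auto
          thus False using le by simp
        qed
      qed
      have "compact ({x :: nat \<Rightarrow> 'a. \<forall>j. norm (x j) \<le> M} \<inter> B)"
        unfolding B_def by (intro compact_Int_closed compact_box closed_fin_ball r0)
      moreover have "{x :: nat \<Rightarrow> 'a. \<forall>j. norm (x j) \<le> M} \<inter> B = B" using sub by blast
      ultimately show "compact B" by simp
      fix i d assume i: "i \<in> I" and d: "d \<in> {1..D}"
      have dr: "r > real d" using d r by auto
      have "in_lp (ereal (r / (r - real d))) (a i d)" using ain i d qr by (simp add: conj_exp_def)
      hence sa: "summable (\<lambda>j. norm (a i d j) powr (r / (r - real d)))" by (simp add: in_lp_def)
      have d1: "d \<ge> 1" using d by simp
      show "continuous_on B (\<lambda>x. pairing (a i d) x d)"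
        using pairing_cont[of B "a i d" d] uc_fin[OF d1 dr M sa] unfolding B_def by blast
    qed
  qed
qed

theorem theorem4:
  shows
  "(\<forall>(D::nat) (q::ereal) (I::'i set) (a::'i \<Rightarrow> nat \<Rightarrow> nat \<Rightarrow> real) (b::'i \<Rightarrow> real) (M::real).
      1 \<le> D \<longrightarrow> ereal (real D) < q \<longrightarrow> infinite I \<longrightarrow>
      (\<forall>i\<in>I. \<forall>d\<in>{1..D}. in_lp (conj_exp q d) (a i d)) \<longrightarrow> M > 0 \<longrightarrow>
      (\<forall>\<epsilon>>0. \<forall>S. finite S \<and> S \<subseteq> I \<longrightarrow>
         (\<exists>x. in_lp q x \<and> lp_norm q x \<le> M \<and> (\<forall>i\<in>S. norm (mult_poly D (a i) x - b i) \<le> \<epsilon>))) \<longrightarrow>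
      (\<exists>x. in_lp q x \<and> lp_norm q x \<le> M \<and> (\<forall>i\<in>I. mult_poly D (a i) x = b i)))
   \<and>
   (\<forall>(D::nat) (q::ereal) (I::'i set) (a::'i \<Rightarrow> nat \<Rightarrow> nat \<Rightarrow> complex) (b::'i \<Rightarrow> complex) (M::real).
      1 \<le> D \<longrightarrow> ereal (real D) < q \<longrightarrow> infinite I \<longrightarrow>
      (\<forall>i\<in>I. \<forall>d\<in>{1..D}. in_lp (conj_exp q d) (a i d)) \<longrightarrow> M > 0 \<longrightarrow>
      (\<forall>\<epsilon>>0. \<forall>S. finite S \<and> S \<subseteq> I \<longrightarrow>
         (\<exists>x. in_lp q x \<and> lp_norm q x \<le> M \<and> (\<forall>i\<in>S. norm (mult_poly D (a i) x - b i) \<le> \<epsilon>))) \<longrightarrow>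
      (\<exists>x. in_lp q x \<and> lp_norm q x \<le> M \<and> (\<forall>i\<in>I. mult_poly D (a i) x = b i)))"
  apply (intro conjI allI impI)
   apply (rule main_gen; assumption)
  apply (rule main_gen; assumption)
  done

end
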